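(* Let $k\ge3$ and $r\ge1$ be integers. Let $\mathcal{C}$ be a multiset of $2^k+r$ non-zero residues modulo $2^{k+1}$ such that no sub-collection sums to $2^k$ modulo $2^{k+1}$, and such that for no odd $\lambda$ can the multiset $\lambda\cdot\mathcal{C}$ be type 1 compressed. Then either $\mathcal{C}$ contains at least $2^{k-1}+r$ even residues, or there is an odd residue $t$ modulo $2^{k+1}$ such that $\mathcal{C}$ contains at least $2^{k-1}+r$ elements each lying in $\{t,-t,2^k-t,-(2^k-t)\}$.
   Context: Multisets are called collections. $\lambda\cdot\mathcal{C}=\{\lambda c: c\in\mathcal{C}\}$ (as a multiset). For a residue $t$ modulo $2^{k+1}$, $|t|$ is the minimal absolute value of an integer in its residue class. A multiset $\mathcal{D}$ of residues modulo $2^{k+1}$ can be type 1 compressed if for some $\lambda>0$ it contains at least $\lambda$ elements each equal to $1$ or $-1$ and also an element $t$ with $1<|t|\le\lambda+1$ (the compression replaces $t$ by $|t|$ copies of $1$ if $t\in[1,2^k-1]$ and by $|t|$ copies of $-1$ otherwise). *)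

theory Defs
  imports Main "HOL-Library.Multiset"
begin

text \<open>Residues modulo M are represented by integers, compared via mod M.
  res_abs M t is the minimal absolute value of an integer in the class of t.\<close>
definition res_abs :: "int \<Rightarrow> int \<Rightarrow> int" where
  "res_abs M t = min (t mod M) (M - t mod M)"

definition type1_compressible :: "nat \<Rightarrow> int multiset \<Rightarrow> bool" where
  "type1_compressible k D \<longleftrightarrow>
     (\<exists>lam::nat. lam > 0 \<and>
        lam \<le> size (filter_mset (\<lambda>d. d mod 2^(k+1) = 1 \<or> d mod 2^(k+1) = (-1) mod 2^(k+1)) D) \<and>
        (\<exists>t\<in>#D. 1 < res_abs (2^(k+1)) t \<and> res_abs (2^(k+1)) t \<le> int lam + 1))"

definition scale_res :: "nat \<Rightarrow> int \<Rightarrow> int multiset \<Rightarrow> int multiset" where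
  "scale_res k lam C = image_mset (\<lambda>c. (lam * c) mod 2^(k+1)) C"

end

theory Submission
  imports Defs
begin


definition SS :: "int \<Rightarrow> int multiset \<Rightarrow> int set" where
  "SS N C = {sum_mset D mod N | D. D \<subseteq># C}"

definition shift :: "int \<Rightarrow> int \<Rightarrow> int set \<Rightarrow> int set" where
  "shift N a X = (\<lambda>z. (z + a) mod N) ` X"

definition bd :: "int \<Rightarrow> int \<Rightarrow> int set \<Rightarrow> int set" where
  "bd N a X = {z \<in> X. (z + a) mod N \<notin> X}"

lemma subset_add_mset_notin:
  assumes "D \<subseteq># add_mset y C" "y \<notin># D" shows "D \<subseteq># C"
  using assms unfolding subseteq_mset_def
  by (metis count_add_mset count_eq_zero_iff le_SucE zero_le)

lemma subset_add_mset_in: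
  assumes "D \<subseteq># C" shows "D \<subseteq># add_mset y C"
  using assms unfolding subseteq_mset_def by (simp add: le_SucI)

lemma SS_add_mset:
  "SS N (add_mset y C) = SS N C \<union> shift N y (SS N C)"
proof (intro equalityI subsetI)
  fix s assume "s \<in> SS N (add_mset y C)"
  then obtain D where D: "D \<subseteq># add_mset y C" "s = sum_mset D mod N" unfolding SS_def by auto
  show "s \<in> SS N C \<union> shift N y (SS N C)"
  proof (cases "y \<in># D")
    case True
    then obtain D' where D': "D = add_mset y D'" by (metis multi_member_split)
    with D have "D' \<subseteq># C" by simp
    moreover have eq: "s = (sum_mset D' mod N + y) mod N"
    proof -
      have "s = (y + sum_mset D') mod N" using D D' by simp
      also have "\<dots> = (sum_mset D' + y) mod N" by (simp only: add.commute)
      also have "\<dots> = (sum_mset D' mod N + y) mod N" by (simp only: mod_add_left_eq)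
      finally show ?thesis .
    qed
    moreover have mem: "sum_mset D' mod N \<in> SS N C" using \<open>D' \<subseteq># C\<close> unfolding SS_def by blast
    have "(sum_mset D' mod N + y) mod N \<in> shift N y (SS N C)" unfolding shift_def
      using mem by (rule imageI[where f="\<lambda>z. (z + y) mod N"])
    then have "s \<in> shift N y (SS N C)" using eq by (simp only:)
    then show ?thesis by blast
  next
    case False
    then have "D \<subseteq># C" by (rule subset_add_mset_notin[OF D(1)])
    then have "s \<in> SS N C" using D unfolding SS_def by blast
    then show ?thesis by blast
  qed
next
  fix s assume "s \<in> SS N C \<union> shift N y (SS N C)"
  then show "s \<in> SS N (add_mset y C)"
  proof
    assume "s \<in> SS N C"
    then obtain D where DC: "D \<subseteq># C" "s = sum_mset D mod N" unfolding SS_def by auto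
    moreover have "D \<subseteq># add_mset y C" using DC(1) by (rule subset_add_mset_in)
    ultimately show ?thesis unfolding SS_def by (intro CollectI exI[of _ D]) simp
  next
    assume "s \<in> shift N y (SS N C)"
    then obtain s' where s': "s' \<in> SS N C" "s = (s' + y) mod N" unfolding shift_def by blast
    then obtain D where D: "D \<subseteq># C" "s = (sum_mset D mod N + y) mod N" unfolding SS_def by blast
    then have "add_mset y D \<subseteq># add_mset y C" by simp
    moreover have "s = sum_mset (add_mset y D) mod N"
    proof -
      have "s = (sum_mset D + y) mod N" using D by (simp only: mod_add_left_eq)
      also have "\<dots> = sum_mset (add_mset y D) mod N" by (simp add: add.commute)
      finally show ?thesis .
    qed
    ultimately show ?thesis unfolding SS_def by blast
  qed
qed

lemma zero_in_SS: "0 \<in> SS N C"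
  unfolding SS_def by (rule CollectI, rule exI[of _ "{#}"]) simp

lemma SS_range: "N > 0 \<Longrightarrow> SS N C \<subseteq> {0..<N}"
  unfolding SS_def by auto

lemma SS_finite: "N > 0 \<Longrightarrow> finite (SS N C)"
  using SS_range finite_subset by blast

lemma SS_mono: "C' \<subseteq># C \<Longrightarrow> SS N C' \<subseteq> SS N C"
  unfolding SS_def using subset_mset.order_trans by blast

lemma elem_in_SS: "x \<in># C \<Longrightarrow> x mod N \<in> SS N C"
  unfolding SS_def by (rule CollectI, rule exI[of _ "{#x#}"]) simp

lemma shift_inj: fixes N a :: int shows "N > 0 \<Longrightarrow> inj_on (\<lambda>z. (z + a) mod N) {0..<N}"
proof (rule inj_onI)
  fix x y assume N: "N > 0" and x: "x \<in> {0..<N}" and y: "y \<in> {0..<N}" and e: "(x + a) mod N = (y + a) mod N"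
  then have "((x + a) - a) mod N = ((y + a) - a) mod N" by (metis mod_diff_left_eq)
  then have "x mod N = y mod N" by simp
  then show "x = y" using x y by simp
qed

lemma shift_minus_eq:
  assumes "N > 0" "X \<subseteq> {0..<N}"
  shows "shift N a X - X = shift N a (bd N a X)"
  unfolding shift_def bd_def by blast

lemma card_union_shift:
  assumes N: "N > 0" and X: "X \<subseteq> {0..<N}"
  shows "card (X \<union> shift N a X) = card X + card (bd N a X)"
proof -
  have fX: "finite X" using X finite_subset by blast
  have e: "X \<union> shift N a X = X \<union> (shift N a X - X)" by blast
  have "finite (shift N a X - X)" using fX unfolding shift_def by simp
  then have c1: "card (X \<union> (shift N a X - X)) = card X + card (shift N a X - X)"
    using fX by (subst card_Un_disjoint) auto
  have "card (X \<union> shift N a X) = card X + card (shift N a X - X)" by (subst e) (rule c1)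
  moreover have "card (shift N a X - X) = card (bd N a X)"
  proof -
    have "bd N a X \<subseteq> X" unfolding bd_def by blast
    then have "bd N a X \<subseteq> {0..<N}" using X by (rule order_trans)
    then have "inj_on (\<lambda>z. (z + a) mod N) (bd N a X)" using shift_inj[OF N] inj_on_subset by blast
    then show ?thesis using shift_minus_eq[OF N X] unfolding shift_def by (simp add: card_image)
  qed
  ultimately show ?thesis by simp
qed

lemma bd_union_shift:
  "bd N a (X \<union> shift N a X) \<subseteq> shift N a (bd N a X)"
  unfolding bd_def shift_def by blast

lemma card_bd_union_shift:
  assumes "N > 0" "X \<subseteq> {0..<N}"
  shows "card (bd N a (X \<union> shift N a X)) \<le> card (bd N a X)"
proof -
  have "finite X" using assms finite_subset by blast
  then have "finite (bd N a X)" unfolding bd_def by simp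
  then have "card (shift N a (bd N a X)) \<le> card (bd N a X)" unfolding shift_def by (rule card_image_le)
  moreover have "finite (shift N a (bd N a X))" using \<open>finite (bd N a X)\<close> unfolding shift_def by simp
  ultimately show ?thesis using bd_union_shift card_mono by (metis order_trans)
qed

lemma pow2_decomp: "(y::nat) > 0 \<Longrightarrow> \<exists>j b. y = 2^j * b \<and> odd b"
proof (induction y rule: less_induct)
  case (less y)
  show ?case
  proof (cases "odd y")
    case True then show ?thesis by (intro exI[of _ 0] exI[of _ y]) simp
  next
    case False
    then obtain z where z: "y = 2 * z" by auto
    with less.prems have "z > 0" "z < y" by auto
    with less.IH obtain j b where "z = 2^j * b" "odd b" by blast
    with z show ?thesis by (intro exI[of _ "Suc j"] exI[of _ b]) simp
  qed
qed

lemma hits_half: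
  fixes y :: int
  assumes "y mod 2^(k+1) \<noteq> 0"
  shows "\<exists>m::int. (m * y) mod 2^(k+1) = 2^k"
proof -
  define N :: int where "N = 2^(k+1)"
  have Npos: "N > 0" unfolding N_def by simp
  define y' where "y' = y mod N"
  have "y' \<ge> 0" "y' < N" using Npos unfolding y'_def by auto
  moreover have "y' \<noteq> 0" using assms unfolding y'_def N_def by simp
  ultimately have y'pos: "y' > 0" "y' < N" by auto
  obtain j b where jb: "nat y' = 2^j * b" "odd b" using pow2_decomp[of "nat y'"] y'pos by auto
  have y'eq: "y' = 2^j * int b" using jb y'pos by (metis nat_0_le of_nat_mult of_nat_numeral of_nat_power less_imp_le)
  have "j \<le> k"
  proof (rule ccontr)
    assume "\<not> j \<le> k"
    then have "(2::int)^(k+1) \<le> 2^j" by (intro power_increasing) auto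
    moreover have "int b \<ge> 1" using jb(2) by (cases b) auto
    ultimately have "y' \<ge> 2^(k+1)" using y'eq
      by (metis mult.right_neutral mult_left_mono order_trans zero_le_numeral zero_le_power)
    then show False using y'pos unfolding N_def by simp
  qed
  define m :: int where "m = 2^(k - j)"
  have "m * y' = 2^k * int b" unfolding m_def y'eq
    using \<open>j \<le> k\<close> by (simp add: power_add[symmetric] mult.assoc[symmetric])
  moreover obtain c' where "b = 2 * c' + 1" using jb(2) by (rule oddE)
  then have "int b = 2 * int c' + 1" by simp
  ultimately have "m * y' = N * int c' + 2^k" unfolding N_def by (simp add: algebra_simps)
  then have "(m * y') mod N = 2^k" using Npos unfolding N_def
    by (simp add: mod_pos_pos_trivial)
  moreover have "(m * y) mod N = (m * y') mod N" unfolding y'_def by (simp add: mod_mult_right_eq)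
  ultimately show ?thesis unfolding N_def by auto
qed

lemma bd_nonempty:
  fixes a :: int
  assumes X: "X \<subseteq> {0..<2^(k+1)}" and X0: "0 \<in> X" and Xh: "2^k \<notin> X" and a: "a mod 2^(k+1) \<noteq> 0"
  shows "bd (2^(k+1)) a X \<noteq> {}"
proof
  define N :: int where "N = 2^(k+1)"
  have Npos: "N > 0" unfolding N_def by simp
  assume "bd (2^(k+1)) a X = {}"
  then have cl: "\<And>z. z \<in> X \<Longrightarrow> (z + a) mod N \<in> X" unfolding bd_def N_def by auto
  have mult: "(int m * a) mod N \<in> X" for m :: nat
  proof (induction m)
    case 0 then show ?case using X0 by simp
  next
    case (Suc m)
    have "((int m * a) mod N + a) mod N \<in> X" using cl[OF Suc.IH] .
    moreover have "((int m * a) mod N + a) mod N = (int m * a + a) mod N" by (simp add: mod_add_left_eq)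
    moreover have "int m * a + a = int (Suc m) * a" by (simp add: algebra_simps)
    ultimately show ?case by simp
  qed
  obtain m :: int where m: "(m * a) mod N = 2^k" using hits_half[OF a] unfolding N_def by blast
  have "(m * a) mod N = ((m mod N) * a) mod N" by (simp add: mod_mult_left_eq)
  also have "m mod N = int (nat (m mod N))" using Npos by simp
  finally have "(int (nat (m mod N)) * a) mod N = 2^k" using m by simp
  then show False using mult[of "nat (m mod N)"] Xh by simp
qed

lemma SS_growth:
  assumes "(2::int)^k \<notin> SS (2^(k+1)) C" and "\<forall>c\<in>#C. c mod 2^(k+1) \<noteq> 0"
  shows "card (SS (2^(k+1)) C) \<ge> size C + 1"
  using assms
proof (induction C)
  case empty
  have "SS (2^(k+1)) {#} = {0}" unfolding SS_def by auto
  then show ?case by simp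
next
  case (add y C)
  define N :: int where "N = 2^(k+1)"
  have Npos: "N > 0" unfolding N_def by simp
  have sub: "SS N C \<subseteq> SS N (add_mset y C)" by (rule SS_mono) simp
  then have hC: "2^k \<notin> SS N C" using add.prems unfolding N_def by auto
  then have IH: "card (SS N C) \<ge> size C + 1" using add unfolding N_def by auto
  have "card (SS N (add_mset y C)) = card (SS N C) + card (bd N y (SS N C))"
    unfolding SS_add_mset by (rule card_union_shift[OF Npos SS_range[OF Npos]])
  moreover have "bd N y (SS N C) \<noteq> {}"
    using bd_nonempty[of "SS N C" k y] SS_range[OF Npos] zero_in_SS hC add.prems unfolding N_def by auto
  moreover have "finite (bd N y (SS N C))" using SS_finite[OF Npos] unfolding bd_def by simp
  ultimately have "card (SS N (add_mset y C)) \<ge> card (SS N C) + 1"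
    by (simp add: Suc_le_eq card_gt_0_iff)
  then show ?case using IH unfolding N_def by simp
qed

lemma odd_inverse:
  fixes w :: int
  assumes "odd w"
  shows "\<exists>l. (l * w) mod 2^(k+1) = 1"
proof -
  have "coprime w 2" using assms by (simp add: coprime_right_2_iff_odd)
  then have "coprime w ((2::int)^(k+1))" by (simp add: coprime_power_right_iff)
  then have "gcd w ((2::int)^(k+1)) = 1" by simp
  then obtain u v where uv: "u * w + v * 2^(k+1) = (1::int)" using bezout_int[of w "2^(k+1)"] by auto
  have "u * w - 1 = 2^(k+1) * (-v)" using uv by (simp add: algebra_simps)
  then have "(2::int)^(k+1) dvd (u * w - 1)" by (rule dvdI)
  then have "(u * w) mod 2^(k+1) = 1 mod 2^(k+1)" by (simp add: mod_eq_dvd_iff)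
  also have "\<dots> = 1"
  proof -
    have "(1::int) < 2^(k+1)" using one_less_power[of "2::int" "k+1"] by simp
    then show ?thesis by (simp add: mod_pos_pos_trivial)
  qed
  finally show ?thesis by blast
qed

lemma downclosed_interval:
  fixes D :: "int set"
  assumes fin: "finite D" and nn: "\<forall>i\<in>D. 0 \<le> i" and dc: "\<forall>i\<in>D. \<forall>j. 0 \<le> j \<and> j \<le> i \<longrightarrow> j \<in> D"
  shows "D = {0..<int (card D)}"
proof (cases "D = {}")
  case True then show ?thesis by simp
next
  case False
  define M where "M = Max D"
  have MD: "M \<in> D" using fin False unfolding M_def by simp
  have "D = {0..M}"
  proof
    show "D \<subseteq> {0..M}" using nn fin unfolding M_def by auto
    show "{0..M} \<subseteq> D" using dc MD by auto
  qed
  moreover have "card {0..M} = nat (M + 1)" by simp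
  moreover have "M \<ge> 0" using nn MD by auto
  ultimately show ?thesis by auto
qed

lemma two_indices:
  fixes l j N :: int
  assumes "2 \<le> l" "l \<le> N - 2" "0 \<le> j" "j < N" "j \<noteq> 0" "j \<noteq> 1" "j \<noteq> N - 1"
  shows "\<exists>i1 i2. 0 \<le> i1 \<and> i1 < l \<and> 0 \<le> i2 \<and> i2 < l \<and> i1 \<noteq> i2 \<and> l \<le> (i1 - j) mod N \<and> l \<le> (i2 - j) mod N"
proof -
  define d where "d = N - j"
  have d: "2 \<le> d" "d \<le> N - 2" using assms unfolding d_def by auto
  have md: "(i - j) mod N = i + d" if "0 \<le> i + d" "i + d < N" for i
  proof -
    have "(i - j) mod N = (i + d) mod N" unfolding d_def
      by (metis add.commute diff_add_eq mod_add_self2)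
    also have "\<dots> = i + d" using that by simp
    finally show ?thesis .
  qed
  consider "l \<le> d" | "d < l" "l + d \<le> N" | "d < l" "N < l + d" by linarith
  then show ?thesis
  proof cases
    case 1
    then show ?thesis using assms d md[of 0] md[of 1]
      by (intro exI[of _ 0] exI[of _ 1]) auto
  next
    case 2
    then show ?thesis using assms d md[of "l - 1"] md[of "l - 2"]
      by (intro exI[of _ "l - 1"] exI[of _ "l - 2"]) auto
  next
    case 3
    then show ?thesis using assms d md[of "N - d - 1"] md[of "N - d - 2"]
      by (intro exI[of _ "N - d - 1"] exI[of _ "N - d - 2"]) auto
  qed
qed

lemma core:
  fixes w a :: int and X :: "int set" and N :: int
  assumes N: "N = 2^(k+1)"
    and X: "X \<subseteq> {0..<N}" and X0: "0 \<in> X" and Xh: "(2::int)^k \<notin> X"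
    and w: "odd w" and wX: "w mod N \<in> X"
    and a0: "a mod N \<noteq> 0" and a1: "a mod N \<noteq> w mod N" and a2: "a mod N \<noteq> (-w) mod N"
    and bw: "card (bd N w X) \<le> 1" and ba: "card (bd N a X) \<le> 1"
  shows "int (card X) = N - 1"
proof -
  have Npos: "N > 0" using N by simp
  have fX: "finite X" using X finite_subset by blast
  have evN: "even N" using N by simp
  have w0: "w mod N \<noteq> 0"
  proof
    assume "w mod N = 0"
    then have "N dvd w" by (simp add: mod_eq_0_iff_dvd)
    then have "even w" using evN by (meson dvd_trans)
    then show False using w by simp
  qed
  have "bd N w X \<noteq> {}" using bd_nonempty[of X k w] X X0 Xh w0 N by simp
  moreover have "finite (bd N w X)" using fX unfolding bd_def by simp
  ultimately have "card (bd N w X) = 1" using bw by (simp add: Suc_le_eq card_gt_0_iff le_antisym)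
  then obtain e where bde: "bd N w X = {e}" by (meson card_1_singletonE)
  have eX: "e \<in> X" using bde unfolding bd_def by auto
  have nxt: "(z + w) mod N \<in> X" if "z \<in> X" "z \<noteq> e" for z
    using bde that unfolding bd_def by auto
  obtain l where l: "(l * w) mod N = 1" using odd_inverse[OF w] N by auto
  have lw: "(x * l * w) mod N = x mod N" for x
  proof -
    have "(x * l * w) mod N = (x * ((l * w) mod N)) mod N" by (simp add: mod_mult_right_eq mult.assoc)
    then show ?thesis using l by simp
  qed
  define dl where "dl y = ((e - y) * l) mod N" for y
  have dlr: "0 \<le> dl y" "dl y < N" for y unfolding dl_def using Npos by auto
  have DM: "dl ((e - m * w) mod N) = m mod N" for m
  proof -
    have "dl ((e - m * w) mod N) = ((e - (e - m * w)) * l) mod N"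
      unfolding dl_def by (metis mod_diff_right_eq mod_mult_left_eq)
    also have "\<dots> = (m * l * w) mod N" by (simp add: algebra_simps)
    finally show ?thesis using lw by simp
  qed
  have B: "(e - dl y * w) mod N = y" if "y \<in> X" for y
  proof -
    have "(e - dl y * w) mod N = (e - (e - y) * l * w) mod N"
      unfolding dl_def by (metis mod_diff_right_eq mod_mult_left_eq)
    also have "\<dots> = (e - (e - y)) mod N" using lw[of "e - y"] by (metis mod_diff_right_eq)
    also have "\<dots> = y" using that X by auto
    finally show ?thesis .
  qed
  have A: "(y + int m * w) mod N \<in> X" if "y \<in> X" "int m \<le> dl y" for y m
    using that(2)
  proof (induction m)
    case 0 then show ?case using that(1) X by auto
  next
    case (Suc m)
    then have IH: "(y + int m * w) mod N \<in> X" by simp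
    have ne: "(y + int m * w) mod N \<noteq> e"
    proof
      assume E: "(y + int m * w) mod N = e"
      have "y = (e - dl y * w) mod N" using B[OF that(1)] by simp
      have "dl e = dl ((y + int m * w) mod N)" using E by simp
      have "dl ((y + int m * w) mod N) = ((e - y - int m * w) * l) mod N"
        unfolding dl_def by (metis diff_diff_eq mod_diff_right_eq mod_mult_left_eq)
      also have "\<dots> = ((e - y) * l - int m * l * w) mod N" by (simp add: algebra_simps)
      also have "\<dots> = (dl y - (int m * l * w) mod N) mod N"
        unfolding dl_def by (metis mod_diff_eq)
      also have "\<dots> = (dl y - int m) mod N" using lw[of "int m"] Suc.prems dlr[of y]
        by (metis mod_diff_right_eq)
      also have "\<dots> = dl y - int m" using Suc.prems dlr[of y] by (simp add: mod_pos_pos_trivial)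
      finally have "dl e = dl y - int m" using E by simp
      moreover have "dl e = 0" unfolding dl_def by simp
      ultimately show False using Suc.prems by simp
    qed
    have "((y + int m * w) mod N + w) mod N \<in> X" using nxt[OF IH ne] .
    moreover have "((y + int m * w) mod N + w) mod N = (y + int (Suc m) * w) mod N"
    proof -
      have "((y + int m * w) mod N + w) mod N = (y + int m * w + w) mod N" by (simp only: mod_add_left_eq)
      also have "y + int m * w + w = y + int (Suc m) * w" by (simp add: algebra_simps)
      finally show ?thesis .
    qed
    ultimately show ?case by simp
  qed
  have C: "(e - i * w) mod N \<in> X" if "y \<in> X" "0 \<le> i" "i \<le> dl y" for y i
  proof -
    have "(y + int (nat (dl y - i)) * w) mod N \<in> X" using A[OF that(1), of "nat (dl y - i)"] that by simp
    moreover have "(y + int (nat (dl y - i)) * w) mod N = ((e - dl y * w) mod N + (dl y - i) * w) mod N"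
      using B[OF that(1)] that by simp
    moreover have "\<dots> = (e - dl y * w + (dl y - i) * w) mod N" by (simp only: mod_add_left_eq)
    moreover have "e - dl y * w + (dl y - i) * w = e - i * w" by (simp add: algebra_simps)
    ultimately show ?thesis by simp
  qed
  define Ds where "Ds = dl ` X"
  have injdl: "inj_on dl X"
  proof (rule inj_onI)
    fix x y assume "x \<in> X" "y \<in> X" "dl x = dl y"
    then show "x = y" using B by metis
  qed
  have cardDs: "card Ds = card X" unfolding Ds_def using injdl by (simp add: card_image)
  have Ds_eq: "Ds = {0..<int (card X)}"
  proof -
    have "finite Ds" unfolding Ds_def using fX by simp
    moreover have "\<forall>i\<in>Ds. 0 \<le> i" unfolding Ds_def using dlr by auto
    moreover have "\<forall>i\<in>Ds. \<forall>j. 0 \<le> j \<and> j \<le> i \<longrightarrow> j \<in> Ds"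
    proof (intro ballI allI impI)
      fix i j assume iD: "i \<in> Ds" and j: "0 \<le> j \<and> j \<le> i"
      then obtain y where y: "y \<in> X" "i = dl y" unfolding Ds_def by auto
      then have "(e - j * w) mod N \<in> X" using C j by blast
      moreover have "dl ((e - j * w) mod N) = j" using DM[of j] j dlr[of y] y by simp
      ultimately show "j \<in> Ds" unfolding Ds_def by force
    qed
    ultimately show ?thesis using downclosed_interval cardDs by metis
  qed
  have E: "m mod N < int (card X)" if "(e - m * w) mod N \<in> X" for m
  proof -
    have "dl ((e - m * w) mod N) \<in> Ds" using that unfolding Ds_def by simp
    then show ?thesis using DM[of m] Ds_eq by simp
  qed
  have F: "(e - i * w) mod N \<in> X" if "0 \<le> i" "i < int (card X)" for i
  proof -
    have "i \<in> Ds" using Ds_eq that by simp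
    then obtain y where "y \<in> X" "i = dl y" unfolding Ds_def by auto
    then show ?thesis using B by simp
  qed
  have card2: "card X \<ge> 2"
  proof -
    have "{0, w mod N} \<subseteq> X" using X0 wX by simp
    moreover have "card {0, w mod N} = 2" using w0 by simp
    ultimately show ?thesis using fX by (metis card_mono)
  qed
  have cardle: "int (card X) \<le> N - 1"
  proof -
    have "X \<subseteq> {0..<N} - {2^k}" using X Xh by auto
    then have "card X \<le> card ({0..<N} - {(2::int)^k})" by (intro card_mono) auto
    moreover have "(2::int)^k \<in> {0..<N}" using N by simp
    ultimately show ?thesis using Npos by simp
  qed
  show ?thesis
  proof (rule ccontr)
    assume "int (card X) \<noteq> N - 1"
    then have lle: "int (card X) \<le> N - 2" using cardle by simp
    define j where "j = (a * l) mod N"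
    have aj: "a mod N = (j * w) mod N"
    proof -
      have "(j * w) mod N = (a * l * w) mod N" unfolding j_def by (simp add: mod_mult_left_eq)
      then show ?thesis using lw by simp
    qed
    have jr: "0 \<le> j" "j < N" unfolding j_def using Npos by auto
    have j0: "j \<noteq> 0" using aj a0 by auto
    have j1: "j \<noteq> 1" using aj a1 by auto
    have j2: "j \<noteq> N - 1"
    proof
      assume J: "j = N - 1"
      have "j * w = -w + w * N" unfolding J by (simp add: algebra_simps)
      then have "(j * w) mod N = (-w + w * N) mod N" by simp
      also have "\<dots> = (-w) mod N" by (rule mod_mult_self1)
      finally show False using aj a2 by simp
    qed
    obtain i1 i2 where ii: "0 \<le> i1" "i1 < int (card X)" "0 \<le> i2" "i2 < int (card X)" "i1 \<noteq> i2"
      "int (card X) \<le> (i1 - j) mod N" "int (card X) \<le> (i2 - j) mod N"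
      using two_indices[of "int (card X)" N j] card2 lle jr j0 j1 j2 by auto
    have inbd: "(e - i * w) mod N \<in> bd N a X" if "0 \<le> i" "i < int (card X)" "int (card X) \<le> (i - j) mod N" for i
    proof -
      have "((e - i * w) mod N + a) mod N = (e - i * w + j * w) mod N"
        using aj by (metis mod_add_left_eq mod_add_right_eq)
      also have "\<dots> = (e - (i - j) * w) mod N" by (simp add: algebra_simps)
      finally have "((e - i * w) mod N + a) mod N \<notin> X" using E[of "i - j"] that by auto
      then show ?thesis using F[OF that(1,2)] unfolding bd_def by simp
    qed
    have "(e - i1 * w) mod N \<noteq> (e - i2 * w) mod N"
    proof
      assume "(e - i1 * w) mod N = (e - i2 * w) mod N"
      then have "dl ((e - i1 * w) mod N) = dl ((e - i2 * w) mod N)" by simp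
      then have "i1 mod N = i2 mod N" using DM by simp
      moreover have "i1 mod N = i1" "i2 mod N = i2" using ii lle by (simp_all add: mod_pos_pos_trivial)
      ultimately show False using ii by simp
    qed
    then have "card {(e - i1 * w) mod N, (e - i2 * w) mod N} = 2" by simp
    moreover have "{(e - i1 * w) mod N, (e - i2 * w) mod N} \<subseteq> bd N a X" using inbd ii by auto
    moreover have "finite (bd N a X)" using fX unfolding bd_def by simp
    ultimately have "card (bd N a X) \<ge> 2" by (metis card_mono)
    then show False using ba by simp
  qed
qed


lemma avoid_iff:
  "(\<forall>D. D \<subseteq># C \<longrightarrow> sum_mset D mod 2^(k+1) \<noteq> (2::int)^k) \<longleftrightarrow> (2::int)^k \<notin> SS (2^(k+1)) C"
proof
  assume H: "\<forall>D. D \<subseteq># C \<longrightarrow> sum_mset D mod 2^(k+1) \<noteq> (2::int)^k"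
  show "(2::int)^k \<notin> SS (2^(k+1)) C"
  proof
    assume "(2::int)^k \<in> SS (2^(k+1)) C"
    then obtain D where "D \<subseteq># C" "(2::int)^k = sum_mset D mod 2^(k+1)" unfolding SS_def by auto
    then show False using H by metis
  qed
next
  assume H: "(2::int)^k \<notin> SS (2^(k+1)) C"
  show "\<forall>D. D \<subseteq># C \<longrightarrow> sum_mset D mod 2^(k+1) \<noteq> (2::int)^k"
  proof (intro allI impI)
    fix D assume "D \<subseteq># C"
    then have "sum_mset D mod 2^(k+1) \<in> SS (2^(k+1)) C" unfolding SS_def by (intro CollectI exI[of _ D]) simp
    then show "sum_mset D mod 2^(k+1) \<noteq> (2::int)^k" using H by metis
  qed
qed

lemma compress_mono:
  assumes sub: "D \<subseteq># C" and c: "type1_compressible k (scale_res k lam D)"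
  shows "type1_compressible k (scale_res k lam C)"
proof -
  let ?f = "\<lambda>c. (lam * c) mod 2^(k+1)"
  let ?P = "\<lambda>d. d mod 2^(k+1) = 1 \<or> d mod 2^(k+1) = (-1) mod 2^(k+1)"
  obtain l t where l: "l > 0" "l \<le> size (filter_mset ?P (image_mset ?f D))"
    and t: "t \<in># image_mset ?f D" "1 < res_abs (2^(k+1)) t" "res_abs (2^(k+1)) t \<le> int l + 1"
    using c unfolding type1_compressible_def scale_res_def by blast
  have im: "image_mset ?f D \<subseteq># image_mset ?f C" using sub by (rule image_mset_subseteq_mono)
  then have "size (filter_mset ?P (image_mset ?f D)) \<le> size (filter_mset ?P (image_mset ?f C))"
    by (intro size_mset_mono multiset_filter_mono)
  moreover have "t \<in># image_mset ?f C" by (rule mset_subset_eqD[OF im t(1)])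
  ultimately show ?thesis unfolding type1_compressible_def scale_res_def using l t
    by (intro exI[of _ l]) auto
qed

definition Good :: "nat \<Rightarrow> int multiset \<Rightarrow> bool" where
  "Good k C \<longleftrightarrow> (\<forall>c\<in>#C. 0 < c \<and> c < 2^(k+1)) \<and> (2::int)^k \<notin> SS (2^(k+1)) C
     \<and> (\<forall>lam::int. odd lam \<longrightarrow> \<not> type1_compressible k (scale_res k lam C))"

lemma Good_sub:
  assumes G: "Good k C" and sub: "D \<subseteq># C" shows "Good k D"
proof -
  have "\<forall>c\<in>#D. 0 < c \<and> c < 2^(k+1)" using G mset_subset_eqD[OF sub] unfolding Good_def by blast
  moreover have "(2::int)^k \<notin> SS (2^(k+1)) D" using G SS_mono[OF sub] unfolding Good_def by blast
  moreover have "\<forall>lam::int. odd lam \<longrightarrow> \<not> type1_compressible k (scale_res k lam D)"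
    using G compress_mono[OF sub] unfolding Good_def by blast
  ultimately show ?thesis unfolding Good_def by blast
qed

lemma even_mod_even: "even (N::int) \<Longrightarrow> even (a mod N) = even a"
proof -
  assume e: "even N"
  have "a = N * (a div N) + a mod N" by simp
  moreover have "even (N * (a div N))" using e by simp
  ultimately show ?thesis by (metis dvd_add_right_iff)
qed

lemma sum_even: "\<forall>c\<in>#D. even (c::int) \<Longrightarrow> even (sum_mset D)"
  by (induction D) auto

lemma card_disj_double:
  assumes N: "N > 0" and X: "X \<subseteq> {0..<N}" and d: "X \<inter> shift N x X = {}"
  shows "card (X \<union> shift N x X) = 2 * card X"
proof -
  have "bd N x X = X" using d unfolding bd_def shift_def by blast
  then show ?thesis using card_union_shift[OF N X, of x] by simp
qed

lemma res_abs_le: "N > 0 \<Longrightarrow> res_abs N (j mod N) \<le> \<bar>j\<bar>"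
proof -
  assume N: "N > 0"
  show ?thesis
  proof (cases "j \<ge> 0")
    case True
    then have "j mod N \<le> j" using N by (simp add: zmod_le_nonneg_dividend)
    then show ?thesis unfolding res_abs_def using True by simp
  next
    case False
    show ?thesis
    proof (cases "j mod N = 0")
      case True then show ?thesis unfolding res_abs_def by simp
    next
      case nz: False
      have "(-j) mod N = N - j mod N" using nz by (simp add: zmod_zminus1_eq_if)
      moreover have "(-j) mod N \<le> -j" using False N by (simp add: zmod_le_nonneg_dividend)
      ultimately show ?thesis unfolding res_abs_def using False by simp
    qed
  qed
qed

lemma res_abs_ge2:
  assumes "0 \<le> v" "v < N" "v \<noteq> 0" "v \<noteq> 1" "v \<noteq> N - 1"
  shows "res_abs N v \<ge> 2"
proof -
  have "v mod N = v" using assms by simp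
  then show ?thesis unfolding res_abs_def using assms by simp
qed

lemma sum_pm:
  fixes t N :: int
  assumes "\<forall>c\<in>#P. c mod N = t mod N \<or> c mod N = (-t) mod N" and tt: "t mod N \<noteq> (-t) mod N"
  shows "sum_mset P mod N = ((int (size (filter_mset (\<lambda>c. c mod N = t mod N) P))
            - int (size (filter_mset (\<lambda>c. c mod N = (-t) mod N) P))) * t) mod N"
  using assms(1)
proof (induction P)
  case empty then show ?case by simp
next
  case (add c P)
  define p where "p = int (size (filter_mset (\<lambda>c. c mod N = t mod N) P))"
  define q where "q = int (size (filter_mset (\<lambda>c. c mod N = (-t) mod N) P))"
  have IH: "sum_mset P mod N = ((p - q) * t) mod N" using add unfolding p_def q_def by simp
  have "c mod N = t mod N \<or> c mod N = (-t) mod N" using add.prems by simp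
  then show ?case
  proof
    assume c: "c mod N = t mod N"
    then have "c mod N \<noteq> (-t) mod N" using tt by simp
    then have "int (size (filter_mset (\<lambda>c. c mod N = t mod N) (add_mset c P))) = p + 1"
      "int (size (filter_mset (\<lambda>c. c mod N = (-t) mod N) (add_mset c P))) = q"
      using c unfolding p_def q_def by auto
    moreover have "sum_mset (add_mset c P) mod N = ((p + 1 - q) * t) mod N"
    proof -
      have "sum_mset (add_mset c P) mod N = (c mod N + sum_mset P mod N) mod N" by (simp add: mod_add_eq)
      also have "\<dots> = (t mod N + ((p - q) * t) mod N) mod N" using c IH by simp
      also have "\<dots> = (t + (p - q) * t) mod N" by (simp add: mod_add_eq)
      also have "t + (p - q) * t = (p + 1 - q) * t" by (simp add: algebra_simps)
      finally show ?thesis .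
    qed
    ultimately show ?thesis by simp
  next
    assume c: "c mod N = (-t) mod N"
    then have "c mod N \<noteq> t mod N" using tt by simp
    then have "int (size (filter_mset (\<lambda>c. c mod N = t mod N) (add_mset c P))) = p"
      "int (size (filter_mset (\<lambda>c. c mod N = (-t) mod N) (add_mset c P))) = q + 1"
      using c unfolding p_def q_def by auto
    moreover have "sum_mset (add_mset c P) mod N = ((p - (q + 1)) * t) mod N"
    proof -
      have "sum_mset (add_mset c P) mod N = (c mod N + sum_mset P mod N) mod N" by (simp add: mod_add_eq)
      also have "\<dots> = ((-t) mod N + ((p - q) * t) mod N) mod N" using c IH by simp
      also have "\<dots> = (-t + (p - q) * t) mod N" by (simp add: mod_add_eq)
      also have "-t + (p - q) * t = (p - (q + 1)) * t" by (simp add: algebra_simps)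
      finally show ?thesis .
    qed
    ultimately show ?thesis by simp
  qed
qed

lemma size_pm:
  fixes t N :: int
  assumes "\<forall>c\<in>#P. c mod N = t mod N \<or> c mod N = (-t) mod N" and tt: "t mod N \<noteq> (-t) mod N"
  shows "size (filter_mset (\<lambda>c. c mod N = t mod N) P) + size (filter_mset (\<lambda>c. c mod N = (-t) mod N) P) = size P"
  using assms(1)
proof (induction P)
  case empty then show ?case by simp
next
  case (add c P)
  then show ?case using tt by auto
qed

lemma one_mod_pow2: "(1::int) mod 2^(k+1) = 1"
proof -
  have "(1::int) < 2^(k+1)" using one_less_power[of "2::int" "k+1"] by simp
  then show ?thesis by (simp add: mod_pos_pos_trivial)
qed

lemma inv_cancel: "(l * t) mod N = 1 \<Longrightarrow> (x * l * t) mod (N::int) = x mod N"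
proof -
  assume l: "(l * t) mod N = 1"
  have "(x * l * t) mod N = (x * ((l * t) mod N)) mod N" by (simp add: mod_mult_right_eq mult.assoc)
  then show ?thesis using l by simp
qed

lemma parity_disj:
  assumes N: "N = (2::int)^(k+1)" and ev: "\<forall>c\<in>#P. even c" and x: "odd x"
  shows "SS N P \<inter> shift N x (SS N P) = {}"
proof -
  have eN: "even N" using N by simp
  have evS: "even s" if sS: "s \<in> SS N P" for s
  proof -
    obtain D where D: "D \<subseteq># P" "s = sum_mset D mod N" using sS unfolding SS_def by blast
    have "\<forall>c\<in>#D. even c" using ev mset_subset_eqD[OF D(1)] by blast
    then have "even (sum_mset D)" by (rule sum_even)
    then show ?thesis using D(2) even_mod_even[OF eN] by simp
  qed
  show ?thesis
  proof (rule ccontr)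
    assume "SS N P \<inter> shift N x (SS N P) \<noteq> {}"
    then obtain z where z1: "z \<in> SS N P" and z2: "z \<in> shift N x (SS N P)" by blast
    from z2 obtain s where s: "s \<in> SS N P" "z = (s + x) mod N" unfolding shift_def by blast
    have "odd (s + x)" using evS[OF s(1)] x by simp
    then have "odd z" using s(2) even_mod_even[OF eN] by simp
    then show False using evS[OF z1] by simp
  qed
qed

lemma beta_disj:
  fixes t x :: int and P :: "int multiset"
  assumes k: "k \<ge> 1" and N: "N = (2::int)^(k+1)" and G: "Good k (add_mset x P)"
    and tP: "t \<in># P" and todd: "odd t"
    and pm: "\<forall>c\<in>#P. c mod N = t mod N \<or> c mod N = (-t) mod N"
    and x1: "x mod N \<noteq> t mod N" and x2: "x mod N \<noteq> (-t) mod N"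
  shows "SS N P \<inter> shift N x (SS N P) = {}"
proof (rule ccontr)
  assume "SS N P \<inter> shift N x (SS N P) \<noteq> {}"
  then obtain z where z1: "z \<in> SS N P" and z2: "z \<in> shift N x (SS N P)" by blast
  from z2 obtain s where s: "s \<in> SS N P" "z = (s + x) mod N" unfolding shift_def by blast
  obtain D1 where D1: "D1 \<subseteq># P" "z = sum_mset D1 mod N" using z1 unfolding SS_def by blast
  obtain D2 where D2: "D2 \<subseteq># P" "s = sum_mset D2 mod N" using s(1) unfolding SS_def by blast
  have Npos: "N > 0" using N by simp
  have tt: "t mod N \<noteq> (-t) mod N"
  proof
    assume "t mod N = (-t) mod N"
    then have "N dvd (t - (-t))" by (simp add: mod_eq_dvd_iff)
    then have "(2::int)^(k+1) dvd 2 * t" using N by simp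
    then have "(2::int) * 2^k dvd 2 * t" by simp
    then have "(2::int)^k dvd t" using dvd_mult_cancel_left[of "2::int" "2^k" t] by simp
    moreover have "(2::int) dvd 2^k" using k by (simp add: dvd_power)
    ultimately have "even t" by (rule dvd_trans[rotated])
    then show False using todd by simp
  qed
  let ?A = "size (filter_mset (\<lambda>c. c mod N = t mod N) P)"
  let ?B = "size (filter_mset (\<lambda>c. c mod N = (-t) mod N) P)"
  define m where "m = size P"
  have AB: "?A + ?B = m" unfolding m_def using size_pm[OF pm tt] .
  define p1 where "p1 = size (filter_mset (\<lambda>c. c mod N = t mod N) D1)"
  define q1 where "q1 = size (filter_mset (\<lambda>c. c mod N = (-t) mod N) D1)"
  define p2 where "p2 = size (filter_mset (\<lambda>c. c mod N = t mod N) D2)"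
  define q2 where "q2 = size (filter_mset (\<lambda>c. c mod N = (-t) mod N) D2)"
  have pmD1: "\<forall>c\<in>#D1. c mod N = t mod N \<or> c mod N = (-t) mod N" using pm mset_subset_eqD[OF D1(1)] by blast
  have pmD2: "\<forall>c\<in>#D2. c mod N = t mod N \<or> c mod N = (-t) mod N" using pm mset_subset_eqD[OF D2(1)] by blast
  have S1: "sum_mset D1 mod N = ((int p1 - int q1) * t) mod N" unfolding p1_def q1_def by (rule sum_pm[OF pmD1 tt])
  have S2: "sum_mset D2 mod N = ((int p2 - int q2) * t) mod N" unfolding p2_def q2_def by (rule sum_pm[OF pmD2 tt])
  have "p1 \<le> ?A" unfolding p1_def by (intro size_mset_mono multiset_filter_mono D1(1))
  moreover have "q1 \<le> ?B" unfolding q1_def by (intro size_mset_mono multiset_filter_mono D1(1))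
  moreover have "p2 \<le> ?A" unfolding p2_def by (intro size_mset_mono multiset_filter_mono D2(1))
  moreover have "q2 \<le> ?B" unfolding q2_def by (intro size_mset_mono multiset_filter_mono D2(1))
  ultimately have jb: "\<bar>(int p1 - int q1) - (int p2 - int q2)\<bar> \<le> int m" using AB by linarith
  define j where "j = (int p1 - int q1) - (int p2 - int q2)"
  have xj: "x mod N = (j * t) mod N"
  proof -
    have "x mod N = ((s + x) - s) mod N" by simp
    also have "\<dots> = ((s + x) mod N - s mod N) mod N" by (simp add: mod_diff_eq)
    also have "(s + x) mod N = sum_mset D1 mod N" using s(2) D1(2) by simp
    also have "s mod N = sum_mset D2 mod N" using D2(2) by simp
    also have "(sum_mset D1 mod N - sum_mset D2 mod N) mod N
        = (((int p1 - int q1) * t) mod N - ((int p2 - int q2) * t) mod N) mod N" using S1 S2 by simp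
    also have "\<dots> = ((int p1 - int q1) * t - (int p2 - int q2) * t) mod N" by (simp add: mod_diff_eq)
    also have "(int p1 - int q1) * t - (int p2 - int q2) * t = j * t" unfolding j_def by (simp add: algebra_simps)
    finally show ?thesis .
  qed
  obtain l where l: "(l * t) mod N = 1" using odd_inverse[OF todd] N by auto
  have lodd: "odd l"
  proof
    assume "even l"
    then have "even (l * t)" by simp
    then have "even ((l * t) mod N)" using even_mod_even[of N "l * t"] N by simp
    then show False using l by simp
  qed
  define v where "v = (l * x) mod N"
  have vj: "v = j mod N"
  proof -
    have "v = (l * (x mod N)) mod N" unfolding v_def by (simp add: mod_mult_right_eq)
    also have "\<dots> = (l * ((j * t) mod N)) mod N" using xj by simp
    also have "\<dots> = (j * l * t) mod N" by (simp add: mod_mult_right_eq mult.commute mult.left_commute)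
    also have "\<dots> = j mod N" using inv_cancel[OF l] by simp
    finally show ?thesis .
  qed
  have tv: "(t * v) mod N = x mod N"
  proof -
    have "(t * v) mod N = (t * (l * x)) mod N" unfolding v_def by (simp add: mod_mult_right_eq)
    also have "\<dots> = (x * l * t) mod N" by (simp add: mult.commute mult.left_commute)
    also have "\<dots> = x mod N" using inv_cancel[OF l] by simp
    finally show ?thesis .
  qed
  have vr: "0 \<le> v" "v < N" unfolding v_def using Npos by auto
  have xr: "0 < x" "x < N" using G N unfolding Good_def by auto
  have v0: "v \<noteq> 0"
  proof
    assume "v = 0"
    then have "x mod N = 0" using tv by simp
    then show False using xr by simp
  qed
  have v1: "v \<noteq> 1" using tv x1 by auto
  have v2: "v \<noteq> N - 1"
  proof
    assume V: "v = N - 1"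
    have "t * v = -t + t * N" unfolding V by (simp add: algebra_simps)
    then have "(t * v) mod N = (-t + t * N) mod N" by (simp only:)
    also have "\<dots> = (-t) mod N" by (rule mod_mult_self1)
    finally have "(t * v) mod N = (-t) mod N" .
    then show False using tv x2 by simp
  qed
  have r2: "res_abs N v \<ge> 2" using res_abs_ge2[OF vr v0 v1 v2] .
  have rm: "res_abs N v \<le> int m" using res_abs_le[OF Npos, of j] vj jb unfolding j_def by simp
  have "P \<noteq> {#}" using tP by auto
  then have mpos: "m > 0" unfolding m_def by (simp add: nonempty_has_size)
  let ?f = "\<lambda>c. (l * c) mod 2^(k+1)"
  let ?Q = "\<lambda>d. d mod 2^(k+1) = 1 \<or> d mod 2^(k+1) = (-1) mod (2::int)^(k+1)"
  have Qall: "\<forall>d\<in>#image_mset ?f P. ?Q d"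
  proof
    fix d assume "d \<in># image_mset ?f P"
    then obtain c where c: "c \<in># P" "d = (l * c) mod 2^(k+1)" by auto
    have "c mod N = t mod N \<or> c mod N = (-t) mod N" using pm c(1) by blast
    then show "?Q d"
    proof
      assume ct: "c mod N = t mod N"
      have "(l * c) mod N = (l * (c mod N)) mod N" by (simp add: mod_mult_right_eq)
      also have "\<dots> = (l * t) mod N" using ct by (simp add: mod_mult_right_eq)
      finally show ?thesis using c(2) l N one_mod_pow2[of k] by simp
    next
      assume ct: "c mod N = (-t) mod N"
      have "(l * c) mod N = (l * (c mod N)) mod N" by (simp add: mod_mult_right_eq)
      also have "\<dots> = (l * (-t)) mod N" using ct by (simp add: mod_mult_right_eq)
      also have "\<dots> = (- (l * t)) mod N" by simp
      also have "\<dots> = (- ((l * t) mod N)) mod N" by (simp add: mod_minus_eq)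
      finally show ?thesis using c(2) l N by simp
    qed
  qed
  have "filter_mset ?Q (image_mset ?f P) = image_mset ?f P" using Qall by (simp add: filter_mset_eq_conv)
  then have "size (filter_mset ?Q (image_mset ?f P)) = m" unfolding m_def by simp
  moreover have "size (filter_mset ?Q (image_mset ?f P)) \<le> size (filter_mset ?Q (image_mset ?f (add_mset x P)))"
    by (intro size_mset_mono multiset_filter_mono image_mset_subseteq_mono) simp
  ultimately have mle: "m \<le> size (filter_mset ?Q (scale_res k l (add_mset x P)))" unfolding scale_res_def by simp
  have vin: "v \<in># scale_res k l (add_mset x P)" unfolding scale_res_def v_def N by simp
  have "type1_compressible k (scale_res k l (add_mset x P))"
    unfolding type1_compressible_def
  proof (intro exI[of _ m] conjI)
    show "m > 0" by (rule mpos)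
    show "m \<le> size (filter_mset ?Q (scale_res k l (add_mset x P)))" by (rule mle)
    show "\<exists>t\<in>#scale_res k l (add_mset x P). 1 < res_abs (2 ^ (k + 1)) t \<and> res_abs (2 ^ (k + 1)) t \<le> int m + 1"
      using vin r2 rm N by (intro bexI[of _ v]) auto
  qed
  then show False using G lodd unfolding Good_def by blast
qed

lemma double_bound:
  assumes G: "Good k (add_mset x P)"
    and d: "SS (2^(k+1)) P \<inter> shift (2^(k+1)) x (SS (2^(k+1)) P) = {}"
  shows "2 * size (add_mset x P) \<le> card (SS (2^(k+1)) (add_mset x P))"
proof -
  define N :: int where "N = 2^(k+1)"
  have Npos: "N > 0" unfolding N_def by simp
  have GP: "Good k P" using G by (rule Good_sub) simp
  have r: "\<forall>c\<in>#P. 0 < c \<and> c < 2^(k+1)" using GP unfolding Good_def by blast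
  have "\<forall>c\<in>#P. c mod 2^(k+1) \<noteq> 0"
  proof
    fix c assume "c \<in># P"
    then have "0 < c" "c < 2^(k+1)" using r by auto
    then show "c mod 2^(k+1) \<noteq> 0" by simp
  qed
  moreover have "(2::int)^k \<notin> SS (2^(k+1)) P" using GP unfolding Good_def by blast
  ultimately have "(2::int)^k \<notin> SS (2^(k+1)) P" "\<forall>c\<in>#P. c mod 2^(k+1) \<noteq> 0" by auto
  then have gr: "card (SS N P) \<ge> size P + 1" unfolding N_def by (rule SS_growth)
  have "card (SS N (add_mset x P)) = 2 * card (SS N P)"
    unfolding SS_add_mset using card_disj_double[OF Npos SS_range[OF Npos]] d unfolding N_def by blast
  then show ?thesis using gr unfolding N_def by simp
qed

lemma mod_pm_trans:
  fixes N w t a :: int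
  assumes "w mod N = t mod N \<or> w mod N = (-t) mod N" "a mod N = t mod N \<or> a mod N = (-t) mod N"
  shows "a mod N = w mod N \<or> a mod N = (-w) mod N"
proof -
  have neg: "(-u) mod N = (-v) mod N" if "u mod N = v mod N" for u v :: int
    using that by (metis mod_minus_eq)
  have nn: "(-(-u)) mod N = u mod N" for u :: int by simp
  show ?thesis using assms neg nn by metis
qed

lemma Zmain:
  assumes k: "k \<ge> 1"
  shows "Good k C \<Longrightarrow> w \<in># C \<Longrightarrow> odd w \<Longrightarrow> a \<in># C \<Longrightarrow> a mod 2^(k+1) \<noteq> w mod 2^(k+1)
    \<Longrightarrow> a mod 2^(k+1) \<noteq> (-w) mod 2^(k+1) \<Longrightarrow> min (2 * size C) (2^(k+1) - 1) \<le> card (SS (2^(k+1)) C)"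
proof (induction "size C" arbitrary: C w a rule: less_induct)
  case (less C)
  define N :: int where "N = 2^(k+1)"
  have Npos: "N > 0" unfolding N_def by simp
  define W where "W D \<longleftrightarrow> (\<exists>w' a'. w' \<in># D \<and> odd w' \<and> a' \<in># D \<and> a' mod N \<noteq> w' mod N \<and> a' mod N \<noteq> (-w') mod N)"
    for D :: "int multiset"
  show ?case
  proof (cases "\<exists>x\<in>#C. \<not> W (C - {#x#})")
    case True
    then obtain x where xC: "x \<in># C" and nW: "\<not> W (C - {#x#})" by blast
    define P where "P = C - {#x#}"
    have CP: "C = add_mset x P" unfolding P_def using xC by simp
    have G: "Good k (add_mset x P)" using less.prems(1) CP by simp
    have "2 * size (add_mset x P) \<le> card (SS (2^(k+1)) (add_mset x P))"
    proof (cases "\<forall>c\<in>#P. even c")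
      case True
      have "w = x"
      proof (rule ccontr)
        assume "w \<noteq> x"
        then have "w \<in># P" using less.prems(2) CP by simp
        then show False using True less.prems(3) by blast
      qed
      then have "odd x" using less.prems(3) by simp
      then show ?thesis using double_bound[OF G] parity_disj[OF refl True] by blast
    next
      case False
      then obtain t where tP: "t \<in># P" and todd: "odd t" by blast
      have pm: "\<forall>c\<in>#P. c mod N = t mod N \<or> c mod N = (-t) mod N"
        using nW tP todd unfolding W_def P_def[symmetric] by blast
      have "\<not> (x mod N = t mod N \<or> x mod N = (-t) mod N)"
      proof
        assume xt: "x mod N = t mod N \<or> x mod N = (-t) mod N"
        then have allC: "\<forall>c\<in>#C. c mod N = t mod N \<or> c mod N = (-t) mod N" using pm CP by auto
        have "w mod N = t mod N \<or> w mod N = (-t) mod N" using allC less.prems(2) by blast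
        moreover have "a mod N = t mod N \<or> a mod N = (-t) mod N" using allC less.prems(4) by blast
        ultimately have "a mod N = w mod N \<or> a mod N = (-w) mod N" by (rule mod_pm_trans)
        then show False using less.prems(5,6) unfolding N_def by blast
      qed
      then have "x mod N \<noteq> t mod N" "x mod N \<noteq> (-t) mod N" by auto
      then show ?thesis using double_bound[OF G] beta_disj[OF k refl G tP todd] pm unfolding N_def by blast
    qed
    then show ?thesis using CP by simp
  next
    case False
    then have allW: "\<forall>x\<in>#C. W (C - {#x#})" by blast
    have IH: "min (2 * size (C - {#x#})) (2^(k+1) - 1) \<le> card (SS N (C - {#x#}))" if xC: "x \<in># C" for x
    proof -
      obtain w' a' where wa: "w' \<in># C - {#x#}" "odd w'" "a' \<in># C - {#x#}" "a' mod N \<noteq> w' mod N" "a' mod N \<noteq> (-w') mod N"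
        using allW xC unfolding W_def by blast
      have "size (C - {#x#}) < size C" using xC by (simp add: size_Diff1_less)
      moreover have "Good k (C - {#x#})" using less.prems(1) by (rule Good_sub) simp
      ultimately show ?thesis using less.hyps[of "C - {#x#}" w' a'] wa unfolding N_def by blast
    qed
    have inc: "card (SS N C) = card (SS N (C - {#x#})) + card (bd N x (SS N (C - {#x#})))"
      if xC: "x \<in># C" for x
    proof -
      have "C = add_mset x (C - {#x#})" using xC by simp
      then have "SS N C = SS N (C - {#x#}) \<union> shift N x (SS N (C - {#x#}))" by (metis SS_add_mset)
      then show ?thesis using card_union_shift[OF Npos SS_range[OF Npos]] by simp
    qed
    show ?thesis
    proof (cases "\<exists>x\<in>#C. card (SS N (C - {#x#})) + 2 \<le> card (SS N C)")
      case True
      then obtain x where xC: "x \<in># C" and big: "card (SS N (C - {#x#})) + 2 \<le> card (SS N C)" by blast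
      have "size (C - {#x#}) + 1 = size C" using xC by (simp add: size_Diff1_less insert_DiffM)
        (metis Suc_eq_plus1 add_mset_remove_trivial_eq insert_DiffM size_add_mset)
      then show ?thesis using IH[OF xC] big unfolding N_def by linarith
    next
      case False
      then have small: "card (bd N x (SS N (C - {#x#}))) \<le> 1" if "x \<in># C" for x
        using inc[OF that] that by fastforce
      have bdC: "card (bd N x (SS N C)) \<le> 1" if xC: "x \<in># C" for x
      proof -
        have "C = add_mset x (C - {#x#})" using xC by simp
        then have "SS N C = SS N (C - {#x#}) \<union> shift N x (SS N (C - {#x#}))" by (metis SS_add_mset)
        then have "card (bd N x (SS N C)) \<le> card (bd N x (SS N (C - {#x#})))"
          using card_bd_union_shift[OF Npos SS_range[OF Npos]] by simp
        then show ?thesis using small[OF xC] by simp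
      qed
      have "0 < a" "a < N" using less.prems(1,4) unfolding Good_def N_def by auto
      then have a0: "a mod N \<noteq> 0" by simp
      have hC: "(2::int)^k \<notin> SS N C" using less.prems(1) unfolding Good_def N_def by blast
      have a1: "a mod N \<noteq> w mod N" using less.prems(5) unfolding N_def .
      have a2: "a mod N \<noteq> (-w) mod N" using less.prems(6) unfolding N_def .
      have "int (card (SS N C)) = N - 1"
        by (rule core[OF N_def SS_range[OF Npos] zero_in_SS hC less.prems(3) elem_in_SS[OF less.prems(2)]
              a0 a1 a2 bdC[OF less.prems(2)] bdC[OF less.prems(4)]])
      moreover have "int (2^(k+1) - 1 :: nat) = (2::int)^(k+1) - 1"
        using one_le_power[of "2::nat" "k+1"] by (simp add: of_nat_diff)
      ultimately have "card (SS N C) = 2^(k+1) - 1" unfolding N_def by linarith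
      then show ?thesis unfolding N_def by simp
    qed
  qed
qed

theorem lemma3p6:
  fixes k r :: nat and C :: "int multiset"
  assumes "k \<ge> 3" and "r \<ge> 1"
    and "size C = 2^k + r"
    and "\<forall>c\<in>#C. 0 < c \<and> c < 2^(k+1)"
    and "\<forall>D. D \<subseteq># C \<longrightarrow> sum_mset D mod 2^(k+1) \<noteq> 2^k"
    and "\<forall>lam::int. odd lam \<longrightarrow> \<not> type1_compressible k (scale_res k lam C)"
  shows "2^(k-1) + r \<le> size (filter_mset even C) \<or>
    (\<exists>t::int. odd t \<and>
       2^(k-1) + r \<le> size (filter_mset (\<lambda>c. c mod 2^(k+1) \<in>
          {t mod 2^(k+1), (-t) mod 2^(k+1), (2^k - t) mod 2^(k+1), (-(2^k - t)) mod 2^(k+1)}) C))"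
proof -
  define N :: int where "N = 2^(k+1)"
  have Npos: "N > 0" unfolding N_def by simp
  have k1: "k \<ge> 1" using assms(1) by simp
  have hC: "(2::int)^k \<notin> SS N C" using assms(5) avoid_iff unfolding N_def by blast
  have G: "Good k C" unfolding Good_def using assms(4,6) hC unfolding N_def by blast
  have pk: "(2::nat)^(k-1) \<le> 2^k" by (simp add: power_increasing)
  show ?thesis
  proof (cases "\<forall>c\<in>#C. even c")
    case True
    then have "filter_mset even C = C" by (simp add: filter_mset_eq_conv)
    then have "2^(k-1) + r \<le> size (filter_mset even C)" using assms(3) pk by simp
    then show ?thesis by blast
  next
    case False
    then obtain w where wC: "w \<in># C" and wodd: "odd w" by blast
    show ?thesis
    proof (cases "\<forall>c\<in>#C. c mod N = w mod N \<or> c mod N = (-w) mod N")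
      case True
      let ?S = "{w mod 2^(k+1), (-w) mod 2^(k+1), (2^k - w) mod 2^(k+1), (-(2^k - w)) mod (2::int)^(k+1)}"
      have "filter_mset (\<lambda>c. c mod 2^(k+1) \<in> ?S) C = C"
        using True unfolding N_def by (auto simp: filter_mset_eq_conv)
      then have "2^(k-1) + r \<le> size (filter_mset (\<lambda>c. c mod 2^(k+1) \<in> ?S) C)" using assms(3) pk by simp
      then show ?thesis using wodd by blast
    next
      case False
      then obtain a where aC: "a \<in># C" and a1: "a mod N \<noteq> w mod N" and a2: "a mod N \<noteq> (-w) mod N" by blast
      have aw: "a \<noteq> w" using a1 by blast
      obtain C1 where C1: "C = add_mset w C1" using wC by (metis multi_member_split)
      have "a \<in># C1" using aC aw C1 by simp
      then obtain C2 where C2: "C1 = add_mset a C2" by (metis multi_member_split)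
      have "size C2 + 2 = size C" using C1 C2 by simp
      moreover have "(2::nat)^3 \<le> 2^k" using assms(1) by (rule power_increasing) simp
      ultimately have "size C2 \<ge> 1" using assms(3) by simp
      then have "C2 \<noteq> {#}" by auto
      then obtain x where xC2: "x \<in># C2" by blast
      then obtain R where R: "C2 = add_mset x R" by (metis multi_member_split)
      define C' where "C' = add_mset w (add_mset a R)"
      have CC': "C = add_mset x C'" unfolding C'_def using C1 C2 R by simp
      have G': "Good k C'" using G unfolding CC' by (rule Good_sub) simp
      have "min (2 * size C') (2^(k+1) - 1) \<le> card (SS (2^(k+1)) C')"
        using Zmain[OF k1 G', of w a] wodd a1 a2 unfolding C'_def N_def by simp
      moreover have "size C' = 2^k + r - 1" using assms(3) CC' by simp
      moreover have "2 * (2^k + r - 1) \<ge> (2::nat)^(k+1) - 1" using assms(2) by simp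
      ultimately have cardC': "card (SS N C') \<ge> 2^(k+1) - 1" unfolding N_def by simp
      have sub: "SS N C' \<subseteq> {0..<N} - {2^k}" using SS_range[OF Npos] G' unfolding Good_def N_def by auto
      have cardR: "card ({0..<N} - {(2::int)^k}) = 2^(k+1) - 1"
      proof -
        have "(2::int)^k \<in> {0..<N}" unfolding N_def by simp
        then have "card ({0..<N} - {(2::int)^k}) = nat N - 1" by simp
        moreover have "N = int (2^(k+1))" unfolding N_def by simp
        then have "nat N = 2^(k+1)" by (simp only: nat_int)
        ultimately show ?thesis by simp
      qed
      have fin: "finite ({0..<N} - {(2::int)^k})" by simp
      have "card (SS N C') \<le> card ({0..<N} - {(2::int)^k})" by (rule card_mono[OF fin sub])
      then have "card (SS N C') = card ({0..<N} - {(2::int)^k})" using cardC' cardR by linarith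
      then have eqS: "SS N C' = {0..<N} - {2^k}" by (rule card_subset_eq[OF fin sub])
      have x0: "0 < x" "x < N" using assms(4) xC2 C1 C2 unfolding N_def by auto
      have "(2^k - x) mod N \<in> {0..<N} - {2^k}"
      proof -
        have "(2^k - x) mod N \<noteq> 2^k"
        proof
          assume "(2^k - x) mod N = 2^k"
          then have "(2^k - x) mod N = (2^k) mod N" unfolding N_def by simp
          then have "N dvd (2^k - x - 2^k)" by (simp add: mod_eq_dvd_iff)
          then have "N dvd x" by (simp add: dvd_minus_iff)
          then show False using x0 by (simp add: zdvd_not_zless)
        qed
        then show ?thesis using Npos by simp
      qed
      then have "(2^k - x) mod N \<in> SS N C'" using eqS by simp
      then obtain D where D: "D \<subseteq># C'" "(2^k - x) mod N = sum_mset D mod N" unfolding SS_def by blast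
      have "add_mset x D \<subseteq># C" using D(1) CC' by simp
      moreover have "sum_mset (add_mset x D) mod 2^(k+1) = 2^k"
      proof -
        have "sum_mset (add_mset x D) mod N = (x + sum_mset D mod N) mod N" by (simp add: mod_add_right_eq)
        also have "\<dots> = (x + (2^k - x) mod N) mod N" using D(2) by simp
        also have "\<dots> = (x + (2^k - x)) mod N" by (simp add: mod_add_right_eq)
        also have "\<dots> = 2^k" unfolding N_def by simp
        finally show ?thesis unfolding N_def .
      qed
      ultimately show ?thesis using assms(5) by blast
    qed
  qed
qed

end
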